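(* Assume (A1)–(A4) below and $a<0$. Let $(w_j)_{j\in\mathbb{N}}$ be the unique real sequence with $w_0=\dots=w_{r-1}=-1$, $\sum_{\ell=-r}^pa_\ell w_{j+\ell+r}=0$ for all $j\ge0$, and $w_j\to0$. Then there exists a unique sequence $(\widetilde w_j)_{j\in\mathbb{N}}$ such that - $\sum_{\ell=-r}^pa_\ell\widetilde w_{j+\ell}+w_j=0$ for all $j\ge r$; - $\widetilde w_0=\dots=\widetilde w_{r-1}=0$; - $\widetilde w_j\to0$ as $j\to\infty$. Moreover, $(\widetilde w_j)$ decays exponentially fast at infinity.
   Context: Fix the following data: - a real number $a\neq0$; - nonnegative integers $p,r$ and real coefficients $a_{-r},\dots,a_p$ with $a_{-r}\neq0$ and $a_p\neq0$; - an integer $k\ge1$ and real coefficients $\alpha_0,\dots,\alpha_k$, $\beta_0,\dots,\beta_{k-1}$ with $\alpha_k=1$ and $|\alpha_0|+|\beta_0|>0$; - a fixed ratio $\lambda>0$. For $\Delta t\in(0,1]$ set $\Delta x=\Delta t/\lambda$. Let $\mathcal A(z)=\sum_{\ell=-r}^p a_\ell z^\ell$ for $z\in\mathbb{C}\setminus\{0\}$. Assumptions: (A1) $\sum_{\ell=-r}^p a_\ell=0$ and $\sum_{\ell=-r}^p\ell a_\ell=a$. (A2) $\sum_{\sigma=0}^k\alpha_\sigma=0$ and $\sum_{\sigma=0}^k\sigma\alpha_\sigma=\sum_{\sigma=0}^{k-1}\beta_\sigma$. (A3) There is $C>0$ such that for all $\Delta t\in(0,1]$, every solution $(u_j^n)_{j\in\mathbb{Z},n\in\mathbb{N}}$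 of $\sum_{\sigma=0}^k\alpha_\sigma u_j^{n+\sigma}+\lambda\sum_{\sigma=0}^{k-1}\beta_\sigma\sum_{\ell=-r}^pa_\ell u_{j+\ell}^{n+\sigma}=0$ ($j\in\mathbb{Z}$, $n\in\mathbb{N}$) satisfies $\sup_{n}\sum_{j\in\mathbb{Z}}\Delta x|u_j^n|^2\le C\sum_{\sigma=0}^{k-1}\sum_{j\in\mathbb{Z}}\Delta x|u_j^\sigma|^2$. (A4) $\mathcal A(e^{i\theta})\neq0$ for all $\theta\in[-\pi,\pi]\setminus\{0\}$. Under these assumptions with $a<0$, the sequence $(w_j)$ exists, is unique, and decays exponentially. *)

theory Defs
  imports "HOL-Analysis.Analysis"
begin

definition symbolA :: "nat \<Rightarrow> nat \<Rightarrow> (int \<Rightarrow> real) \<Rightarrow> complex \<Rightarrow> complex" where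
  "symbolA p r c z = (\<Sum>l\<in>{- int r..int p}. complex_of_real (c l) * z powi l)"

definition scheme_solution ::
  "nat \<Rightarrow> nat \<Rightarrow> (int \<Rightarrow> real) \<Rightarrow> nat \<Rightarrow> (nat \<Rightarrow> real) \<Rightarrow> (nat \<Rightarrow> real) \<Rightarrow> real
   \<Rightarrow> (int \<Rightarrow> nat \<Rightarrow> complex) \<Rightarrow> bool" where
  "scheme_solution p r c k alpha beta lam u \<longleftrightarrow>
     (\<forall>j n. (\<Sum>s\<le>k. complex_of_real (alpha s) * u j (n + s))
            + complex_of_real lam * (\<Sum>s<k. complex_of_real (beta s) *
                 (\<Sum>l\<in>{- int r..int p}. complex_of_real (c l) * u (j + l) (n + s))) = 0)"

text \<open>(A3): l^2-stability, uniformly in dt in (0,1], dx = dt/lam.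
  The supremum bound is rendered as: whenever the right-hand side is finite
  (initial data square summable), every time level is square summable and
  its weighted l^2 norm is bounded by C times the initial one.\<close>
definition l2_stable ::
  "nat \<Rightarrow> nat \<Rightarrow> (int \<Rightarrow> real) \<Rightarrow> nat \<Rightarrow> (nat \<Rightarrow> real) \<Rightarrow> (nat \<Rightarrow> real) \<Rightarrow> real \<Rightarrow> bool" where
  "l2_stable p r c k alpha beta lam \<longleftrightarrow>
     (\<exists>C>0. \<forall>dt\<in>{0<..1::real}. \<forall>u.
        scheme_solution p r c k alpha beta lam u \<longrightarrow>
        (\<forall>s<k. (\<lambda>j. (dt / lam) * (norm (u j s))\<^sup>2) summable_on UNIV) \<longrightarrow>
        (\<forall>n. (\<lambda>j. (dt / lam) * (norm (u j n))\<^sup>2) summable_on UNIV \<and>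
             (\<Sum>\<^sub>\<infinity>j. (dt / lam) * (norm (u j n))\<^sup>2)
               \<le> C * (\<Sum>s<k. \<Sum>\<^sub>\<infinity>j. (dt / lam) * (norm (u j s))\<^sup>2)))"

end

theory Submission
  imports Defs "HOL-Complex_Analysis.Complex_Analysis" "HOL-Computational_Algebra.Fundamental_Theorem_Algebra"
begin


context
  fixes p r :: nat and c :: "int \<Rightarrow> real" and k :: nat and alpha beta :: "nat \<Rightarrow> real" and lam :: real
begin

definition newlev :: "(nat \<Rightarrow> int \<Rightarrow> complex) \<Rightarrow> int \<Rightarrow> complex" where
 "newlev W j = -(\<Sum>s<k. complex_of_real (alpha s) * W s j) - complex_of_real lam *
     (\<Sum>s<k. complex_of_real (beta s) * (\<Sum>l\<in>{- int r..int p}. complex_of_real (c l) * W s (j + l)))"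

definition stepW :: "(nat \<Rightarrow> int \<Rightarrow> complex) \<Rightarrow> nat \<Rightarrow> int \<Rightarrow> complex" where
 "stepW W = (\<lambda>s j. if Suc s < k then W (Suc s) j else newlev W j)"

definition solW :: "(nat \<Rightarrow> int \<Rightarrow> complex) \<Rightarrow> int \<Rightarrow> nat \<Rightarrow> complex" where
 "solW W0 j n = (stepW ^^ n) W0 0 j"

lemma funpow_window: "s < k \<Longrightarrow> (stepW ^^ s) W 0 = W s"
proof (induction s arbitrary: W)
  case 0 then show ?case by simp
next
  case (Suc s)
  have "(stepW ^^ Suc s) W 0 = (stepW ^^ s) (stepW W) 0" by (simp add: funpow_Suc_right del: funpow.simps)
  also have "\<dots> = stepW W s" using Suc by simp
  also have "\<dots> = W (Suc s)" using Suc.prems by (auto simp: stepW_def)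
  finally show ?case .
qed

lemma funpow_k: "k \<ge> 1 \<Longrightarrow> (stepW ^^ k) W 0 = newlev W"
proof -
  assume "k \<ge> 1"
  then obtain m where k: "k = Suc m" by (cases k) auto
  have "(stepW ^^ k) W 0 = (stepW ^^ m) (stepW W) 0" by (simp add: k funpow_Suc_right del: funpow.simps)
  also have "\<dots> = stepW W m" using k funpow_window by simp
  also have "\<dots> = newlev W" unfolding stepW_def using k by simp
  finally show ?thesis .
qed

lemma solW_shift: "s < k \<Longrightarrow> solW W0 j (n + s) = (stepW ^^ n) W0 s j"
  unfolding solW_def by (simp add: funpow_add add.commute[of n s] funpow_window)

lemma solW_k: "k \<ge> 1 \<Longrightarrow> solW W0 j (n + k) = newlev ((stepW ^^ n) W0) j"
  unfolding solW_def by (simp add: funpow_add add.commute[of n k] funpow_k)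

lemma solW_scheme:
  assumes "k \<ge> 1" "alpha k = 1"
  shows "scheme_solution p r c k alpha beta lam (solW W0)"
  unfolding scheme_solution_def
proof (intro allI)
  fix j n
  let ?W = "(stepW ^^ n) W0"
  have "(\<Sum>s\<le>k. complex_of_real (alpha s) * solW W0 j (n + s))
        = (\<Sum>s<k. complex_of_real (alpha s) * ?W s j) + newlev ?W j"
    using assms solW_k[of W0 j n] by (simp add: lessThan_Suc_atMost[symmetric] solW_shift)
  moreover have "(\<Sum>s<k. complex_of_real (beta s) *
                 (\<Sum>l\<in>{- int r..int p}. complex_of_real (c l) * solW W0 (j + l) (n + s)))
      = (\<Sum>s<k. complex_of_real (beta s) * (\<Sum>l\<in>{- int r..int p}. complex_of_real (c l) * ?W s (j + l)))"
    by (intro sum.cong refl) (simp add: solW_shift)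
  ultimately show "(\<Sum>s\<le>k. complex_of_real (alpha s) * solW W0 j (n + s)) +
       complex_of_real lam * (\<Sum>s<k. complex_of_real (beta s) *
                 (\<Sum>l\<in>{- int r..int p}. complex_of_real (c l) * solW W0 (j + l) (n + s))) = 0"
    by (simp add: newlev_def)
qed

lemma aux_lin: "(A::complex) + B + V = 0 \<Longrightarrow> -A - B = V"
  by (metis add.commute diff_0 diff_diff_eq2 diff_minus_eq_add eq_diff_eq minus_diff_eq)

lemma int_abs_add_le: "\<bar>j + l\<bar> \<le> \<bar>j\<bar> + \<bar>l::int\<bar>" by (rule abs_triangle_ineq)

lemma agree:
  assumes k1: "k \<ge> 1" and ak: "alpha k = 1" and sv: "scheme_solution p r c k alpha beta lam v"
    and W0: "\<And>s j. s < k \<Longrightarrow> W0 s j = (if \<bar>j\<bar> + int (s * (p + r + 1)) \<le> N then v j s else 0)"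
  shows "\<bar>j\<bar> + int (n * (p + r + 1)) \<le> N \<Longrightarrow> solW W0 j n = v j n"
proof (induction n arbitrary: j rule: less_induct)
  case (less n)
  show ?case
  proof (cases "n < k")
    case True
    then show ?thesis using solW_shift[of n W0 j 0] W0[of n j] less.prems by simp
  next
    case False
    then obtain m where n: "n = m + k" by (metis add.commute le_add_diff_inverse not_less)
    have eqW: "(stepW ^^ m) W0 s (j + l) = v (j + l) (m + s)"
      if s: "s < k" and l: "l \<in> {- int r..int p}" for s l
    proof -
      have "(stepW ^^ m) W0 s (j + l) = solW W0 (j + l) (m + s)" using solW_shift[OF s] by simp
      also have "\<dots> = v (j + l) (m + s)"
      proof (rule less.IH)
        show "m + s < n" using n s by simp
        have "(m + s + 1) * (p + r + 1) \<le> n * (p + r + 1)" using n s by (intro mult_le_mono1) simp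
        then have "(m + s) * (p + r + 1) + (p + r + 1) \<le> n * (p + r + 1)" by (simp add: algebra_simps)
        then have "int ((m + s) * (p + r + 1)) + int (p + r + 1) \<le> int (n * (p + r + 1))"
          by (metis of_nat_add of_nat_le_iff)
        moreover have "\<bar>j + l\<bar> \<le> \<bar>j\<bar> + int (p + r)" using l by (auto simp: abs_if)
        ultimately show "\<bar>j + l\<bar> + int ((m + s) * (p + r + 1)) \<le> N" using less.prems by linarith
      qed
      finally show ?thesis .
    qed
    have sch: "(\<Sum>s\<le>k. complex_of_real (alpha s) * v j (m + s))
            + complex_of_real lam * (\<Sum>s<k. complex_of_real (beta s) *
                 (\<Sum>l\<in>{- int r..int p}. complex_of_real (c l) * v (j + l) (m + s))) = 0"
      using sv unfolding scheme_solution_def by blast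
    have "solW W0 j n = newlev ((stepW ^^ m) W0) j" using solW_k[OF k1] n by simp
    also have "\<dots> = -(\<Sum>s<k. complex_of_real (alpha s) * v j (m + s)) - complex_of_real lam *
     (\<Sum>s<k. complex_of_real (beta s) * (\<Sum>l\<in>{- int r..int p}. complex_of_real (c l) * v (j + l) (m + s)))"
      unfolding newlev_def using eqW[of _ 0]
      by (intro arg_cong2[where f="(-)"] arg_cong[where f=uminus] arg_cong2[where f="(*)"] sum.cong refl)
         (auto simp: eqW)
    also have "\<dots> = v j (m + k)"
    proof -
      have "(\<Sum>s<k. complex_of_real (alpha s) * v j (m + s)) + complex_of_real lam *
          (\<Sum>s<k. complex_of_real (beta s) * (\<Sum>l\<in>{- int r..int p}. complex_of_real (c l) * v (j + l) (m + s)))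
          + v j (m + k) = 0"
        using sch ak by (simp add: lessThan_Suc_atMost[symmetric] algebra_simps)
      then show ?thesis by (simp add: aux_lin)
    qed
    finally show ?thesis using n by simp
  qed
qed

lemma support:
  assumes k1: "k \<ge> 1"
    and W0: "\<And>s j. s < k \<Longrightarrow> N < \<bar>j\<bar> + int (s * (p + r + 1)) \<Longrightarrow> W0 s j = 0"
  shows "N + int (n * (p + r + 1)) < \<bar>j\<bar> \<Longrightarrow> solW W0 j n = 0"
proof (induction n arbitrary: j rule: less_induct)
  case (less n)
  show ?case
  proof (cases "n < k")
    case True
    have "N < \<bar>j\<bar> + int (n * (p + r + 1))" using less.prems by linarith
    then show ?thesis using solW_shift[of n W0 j 0] W0[of n j] True by simp
  next
    case False
    then obtain m where n: "n = m + k" by (metis add.commute le_add_diff_inverse not_less)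
    have eqW: "(stepW ^^ m) W0 s (j + l) = 0"
      if s: "s < k" and l: "l \<in> {- int r..int p}" for s l
    proof -
      have "(stepW ^^ m) W0 s (j + l) = solW W0 (j + l) (m + s)" using solW_shift[OF s] by simp
      also have "\<dots> = 0"
      proof (rule less.IH)
        show "m + s < n" using n s by simp
        have "(m + s + 1) * (p + r + 1) \<le> n * (p + r + 1)" using n s by (intro mult_le_mono1) simp
        then have "(m + s) * (p + r + 1) + (p + r + 1) \<le> n * (p + r + 1)" by (simp add: algebra_simps)
        then have "int ((m + s) * (p + r + 1)) + int (p + r + 1) \<le> int (n * (p + r + 1))"
          by (metis of_nat_add of_nat_le_iff)
        moreover have "\<bar>j\<bar> \<le> \<bar>j + l\<bar> + int (p + r)" using l by (auto simp: abs_if)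
        ultimately show "N + int ((m + s) * (p + r + 1)) < \<bar>j + l\<bar>" using less.prems by linarith
      qed
      finally show ?thesis .
    qed
    have "solW W0 j n = newlev ((stepW ^^ m) W0) j" using solW_k[OF k1] n by simp
    also have "\<dots> = 0"
      unfolding newlev_def using eqW[of _ 0] by (simp add: eqW)
    finally show ?thesis .
  qed
qed

lemma card_sym_int: "card {- int M..int M} = 2 * M + 1"
  by simp

lemma instab:
  assumes k1: "k \<ge> 1" and ak: "alpha k = 1" and lam: "lam > 0"
    and sv: "scheme_solution p r c k alpha beta lam v"
    and G: "\<And>j n. norm (v j n) = G n"
    and unb: "\<And>B. \<exists>n. G n > B"
    and st: "l2_stable p r c k alpha beta lam"
  shows False
proof -
  obtain C where C: "C > 0" and Cst: "\<forall>dt\<in>{0<..1::real}. \<forall>u.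
        scheme_solution p r c k alpha beta lam u \<longrightarrow>
        (\<forall>s<k. (\<lambda>j. (dt / lam) * (norm (u j s))\<^sup>2) summable_on UNIV) \<longrightarrow>
        (\<forall>n. (\<lambda>j. (dt / lam) * (norm (u j n))\<^sup>2) summable_on UNIV \<and>
             (\<Sum>\<^sub>\<infinity>j. (dt / lam) * (norm (u j n))\<^sup>2)
               \<le> C * (\<Sum>s<k. \<Sum>\<^sub>\<infinity>j. (dt / lam) * (norm (u j s))\<^sup>2))"
    using st unfolding l2_stable_def by blast
  define K where "K = (\<Sum>s<k. (G s)^2)"
  have K0: "K \<ge> 0" unfolding K_def by (intro sum_nonneg) simp
  obtain n where n: "G n > sqrt (2 * C * K)" using unb by blast
  define M where "M = n * (p + r + 1)"
  define N :: int where "N = int (2 * M)"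
  define W0 where "W0 = (\<lambda>s (j::int). if \<bar>j\<bar> + int (s * (p + r + 1)) \<le> N then v j s else 0)"
  define u where "u = solW W0"
  have su: "scheme_solution p r c k alpha beta lam u"
    unfolding u_def by (rule solW_scheme[OF k1 ak])
  have agr: "\<And>j n. \<bar>j\<bar> + int (n * (p + r + 1)) \<le> N \<Longrightarrow> u j n = v j n"
    unfolding u_def by (rule agree[OF k1 ak sv]) (simp add: W0_def)
  have init: "\<And>j s. s < k \<Longrightarrow> u j s = W0 s j"
    unfolding u_def using solW_shift[of _ W0 _ 0] by simp
  define f where "f = (\<lambda>s j. (1 / lam) * (norm (u j s))\<^sup>2)"
  have fin: "f s summable_on UNIV \<and> infsum (f s) UNIV \<le> (1 / lam) * real (4 * M + 1) * (G s)^2"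
    if s: "s < k" for s
  proof -
    have z: "f s j = 0" if "j \<notin> {-N..N}" for j
    proof -
      have "N < \<bar>j\<bar>" using that by auto
      then have "N < \<bar>j\<bar> + int (s * (p + r + 1))" by linarith
      then show ?thesis using init[OF s, of j] by (simp add: f_def W0_def)
    qed
    have sm: "f s summable_on UNIV \<longleftrightarrow> f s summable_on {-N..N}"
      by (rule summable_on_cong_neutral) (auto simp: z)
    have eq: "infsum (f s) UNIV = infsum (f s) {-N..N}"
      by (rule infsum_cong_neutral) (auto simp: z)
    have "infsum (f s) {-N..N} = (\<Sum>j\<in>{-N..N}. f s j)" by simp
    also have "\<dots> \<le> (\<Sum>j\<in>{-N..N}. (1 / lam) * (G s)^2)"
    proof (intro sum_mono)
      fix j
      have "norm (u j s) \<le> G s" using init[OF s, of j] G[of j s] norm_ge_zero[of "v j s"] by (auto simp: W0_def G)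
      then have "(norm (u j s))^2 \<le> (G s)^2" by (intro power_mono) auto
      then show "f s j \<le> (1 / lam) * (G s)^2" unfolding f_def using lam
        by (intro mult_left_mono) auto
    qed
    also have "\<dots> = (1 / lam) * real (4 * M + 1) * (G s)^2"
      using card_sym_int[of "2 * M"] by (simp add: N_def)
    finally show ?thesis using sm eq by simp
  qed
  have st1: "f n summable_on UNIV \<and> infsum (f n) UNIV \<le> C * (\<Sum>s<k. infsum (f s) UNIV)"
    using Cst[rule_format, of 1 u] su fin by (simp add: f_def)
  have "(\<Sum>j\<in>{- int M..int M}. f n j) \<le> infsum (f n) UNIV"
    by (rule finite_sum_le_infsum) (use st1 lam in \<open>auto simp: f_def\<close>)
  moreover have "(\<Sum>j\<in>{- int M..int M}. f n j) = (1 / lam) * real (2 * M + 1) * (G n)^2"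
  proof -
    have "(\<Sum>j\<in>{- int M..int M}. f n j) = (\<Sum>j\<in>{- int M..int M}. (1 / lam) * (G n)^2)"
    proof (intro sum.cong refl)
      fix j assume "j \<in> {- int M..int M}"
      then have "\<bar>j\<bar> + int (n * (p + r + 1)) \<le> N" by (auto simp: N_def M_def)
      then show "f n j = (1 / lam) * (G n)^2" using agr G by (simp add: f_def)
    qed
    then show ?thesis using card_sym_int[of M] by simp
  qed
  moreover have "C * (\<Sum>s<k. infsum (f s) UNIV) \<le> C * (\<Sum>s<k. (1 / lam) * real (4 * M + 1) * (G s)^2)"
    using fin C by (intro mult_left_mono sum_mono) auto
  moreover have "(\<Sum>s<k. (1 / lam) * real (4 * M + 1) * (G s)^2) = (1 / lam) * real (4 * M + 1) * K"
    unfolding K_def by (simp add: sum_distrib_left)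
  moreover have "infsum (f n) UNIV \<le> C * (\<Sum>s<k. infsum (f s) UNIV)" using st1 by blast
  ultimately have "(1 / lam) * real (2 * M + 1) * (G n)^2 \<le> C * ((1 / lam) * real (4 * M + 1) * K)"
    by (metis (no_types, lifting) order_trans)
  then have "(1 / lam) * (real (2 * M + 1) * (G n)^2) \<le> (1 / lam) * (C * (real (4 * M + 1) * K))"
    by (simp add: algebra_simps)
  then have "real (2 * M + 1) * (G n)^2 \<le> C * (real (4 * M + 1) * K)"
    using lam by (simp only: mult_le_cancel_left_pos[of "1/lam"] divide_pos_pos zero_less_one)
  also have "\<dots> \<le> C * (2 * real (2 * M + 1) * K)"
    using C K0 by (intro mult_left_mono mult_right_mono) auto
  finally have "real (2 * M + 1) * (G n)^2 \<le> real (2 * M + 1) * (2 * C * K)" by (simp add: algebra_simps)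
  then have "(G n)^2 \<le> 2 * C * K"
    by (simp only: mult_le_cancel_left_pos[of "real (2 * M + 1)"] of_nat_0_less_iff)
  moreover have "2 * C * K < (G n)^2"
  proof -
    have "0 \<le> 2 * C * K" using C K0 by simp
    then have "0 \<le> sqrt (2 * C * K)" by simp
    then have "(sqrt (2 * C * K))^2 < (G n)^2" using n by (intro power_strict_mono) auto
    then show ?thesis using \<open>0 \<le> 2 * C * K\<close> by simp
  qed
  ultimately show False by simp
qed

end


definition rhoC :: "nat \<Rightarrow> (nat \<Rightarrow> real) \<Rightarrow> complex \<Rightarrow> complex" where
  "rhoC k alpha z = (\<Sum>s\<le>k. complex_of_real (alpha s) * z ^ s)"
definition sigC :: "nat \<Rightarrow> (nat \<Rightarrow> real) \<Rightarrow> complex \<Rightarrow> complex" where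
  "sigC k beta z = (\<Sum>s<k. complex_of_real (beta s) * z ^ s)"
definition AC :: "nat \<Rightarrow> nat \<Rightarrow> (int \<Rightarrow> real) \<Rightarrow> complex \<Rightarrow> complex" where
  "AC p r c z = (\<Sum>l\<in>{- int r..int p}. complex_of_real (c l) * z powi l)"

lemma vonN:
  assumes k1: "k \<ge> 1" and ak: "alpha k = 1" and lam: "lam > 0"
    and st: "l2_stable p r c k alpha beta lam"
    and kap: "norm \<kappa> = 1" and tau: "norm \<tau> > 1"
  shows "rhoC k alpha \<tau> + complex_of_real lam * sigC k beta \<tau> * AC p r c \<kappa> \<noteq> 0"
proof
  assume E: "rhoC k alpha \<tau> + complex_of_real lam * sigC k beta \<tau> * AC p r c \<kappa> = 0"
  have k0: "\<kappa> \<noteq> 0" using kap by auto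
  define v where "v = (\<lambda>(j::int) (n::nat). \<tau> ^ n * \<kappa> powi j)"
  have sv: "scheme_solution p r c k alpha beta lam v"
    unfolding scheme_solution_def
  proof (intro allI)
    fix j n
    have 1: "(\<Sum>s\<le>k. complex_of_real (alpha s) * v j (n + s)) = \<tau> ^ n * \<kappa> powi j * rhoC k alpha \<tau>"
      unfolding v_def rhoC_def sum_distrib_left by (intro sum.cong refl) (simp add: power_add algebra_simps)
    have 2: "(\<Sum>l\<in>{- int r..int p}. complex_of_real (c l) * v (j + l) (n + s))
             = \<tau> ^ (n + s) * \<kappa> powi j * AC p r c \<kappa>" for s
      unfolding v_def AC_def sum_distrib_left
      by (intro sum.cong refl) (simp add: power_int_add k0 algebra_simps)
    have 3: "(\<Sum>s<k. complex_of_real (beta s) * (\<Sum>l\<in>{- int r..int p}. complex_of_real (c l) * v (j + l) (n + s)))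
        = \<tau> ^ n * \<kappa> powi j * AC p r c \<kappa> * sigC k beta \<tau>"
      unfolding 2 sigC_def sum_distrib_left by (intro sum.cong refl) (simp add: power_add algebra_simps)
    show "(\<Sum>s\<le>k. complex_of_real (alpha s) * v j (n + s)) + complex_of_real lam *
      (\<Sum>s<k. complex_of_real (beta s) * (\<Sum>l\<in>{- int r..int p}. complex_of_real (c l) * v (j + l) (n + s))) = 0"
      unfolding 1 3
    proof -
      have "\<tau> ^ n * \<kappa> powi j * rhoC k alpha \<tau> + complex_of_real lam * (\<tau> ^ n * \<kappa> powi j * AC p r c \<kappa> * sigC k beta \<tau>)
          = \<tau> ^ n * \<kappa> powi j * (rhoC k alpha \<tau> + complex_of_real lam * sigC k beta \<tau> * AC p r c \<kappa>)"
        by (simp add: algebra_simps)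
      then show "\<tau> ^ n * \<kappa> powi j * rhoC k alpha \<tau> + complex_of_real lam * (\<tau> ^ n * \<kappa> powi j * AC p r c \<kappa> * sigC k beta \<tau>) = 0"
        using E by simp
    qed
  qed
  have G: "norm (v j n) = norm \<tau> ^ n" for j n
    unfolding v_def by (simp add: norm_mult norm_power norm_power_int kap)
  have unb: "\<exists>n. norm \<tau> ^ n > B" for B using real_arch_pow[OF tau] by blast
  show False using instab[OF k1 ak lam sv G unb st] .
qed

lemma sig1_nz:
  assumes k1: "k \<ge> 1" and ak: "alpha k = 1" and lam: "lam > 0"
    and st: "l2_stable p r c k alpha beta lam"
    and A1a: "(\<Sum>l\<in>{- int r..int p}. c l) = 0"
    and A2a: "(\<Sum>s\<le>k. alpha s) = 0"
    and A2b: "(\<Sum>s\<le>k. of_nat s * alpha s) = (\<Sum>s<k. beta s)"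
  shows "(\<Sum>s<k. beta s) \<noteq> 0"
proof
  assume B0: "(\<Sum>s<k. beta s) = 0"
  define v where "v = (\<lambda>(j::int) (n::nat). complex_of_nat n)"
  have sv: "scheme_solution p r c k alpha beta lam v"
    unfolding scheme_solution_def
  proof (intro allI)
    fix j n
    have cz: "(\<Sum>l\<in>{- int r..int p}. complex_of_real (c l) * v (j + l) (n + s)) = 0" for s
    proof -
      have "(\<Sum>l\<in>{- int r..int p}. complex_of_real (c l) * v (j + l) (n + s))
          = complex_of_real (\<Sum>l\<in>{- int r..int p}. c l) * of_nat (n + s)"
        unfolding v_def by (simp add: sum_distrib_right)
      then show ?thesis using A1a by simp
    qed
    have "(\<Sum>s\<le>k. complex_of_real (alpha s) * v j (n + s))
        = complex_of_real ((\<Sum>s\<le>k. alpha s) * of_nat n + (\<Sum>s\<le>k. of_nat s * alpha s))"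
      unfolding v_def by (simp add: sum_distrib_right sum_distrib_left sum.distrib algebra_simps)
    also have "\<dots> = 0" using A2a A2b B0 by simp
    finally show "(\<Sum>s\<le>k. complex_of_real (alpha s) * v j (n + s)) + complex_of_real lam *
      (\<Sum>s<k. complex_of_real (beta s) * (\<Sum>l\<in>{- int r..int p}. complex_of_real (c l) * v (j + l) (n + s))) = 0"
      by (simp add: cz)
  qed
  have G: "norm (v j n) = real n" for j n unfolding v_def by simp
  have unb: "\<exists>n. real n > B" for B using reals_Archimedean2 by blast
  show False using instab[OF k1 ak lam sv G unb st] .
qed


definition nin :: "real \<Rightarrow> complex poly \<Rightarrow> nat" where
  "nin R q = (\<Sum>z\<in>{z. poly q z = 0 \<and> norm z < R}. order z q)"

lemma zorder_poly:
  assumes q: "q \<noteq> 0"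
  shows "zorder (poly q) z = int (order z q)"
proof -
  obtain s where s: "q = [:- z, 1:] ^ order z q * s" and nd: "\<not> [:- z, 1:] dvd s"
    using order_decomp[OF q] by blast
  have sz: "poly s z \<noteq> 0" using nd poly_eq_0_iff_dvd by blast
  show ?thesis
  proof (rule zorder_eqI[of UNIV z "poly s"])
    show "poly s holomorphic_on UNIV" by (intro holomorphic_intros)
    fix w
    have "poly q w = (w - z) ^ order z q * poly s w" by (subst s) (simp add: poly_power)
    then show "poly q w = poly s w * (w - z) powi int (order z q)"
      by (simp add: power_int_of_nat mult.commute)
  qed (use sz in auto)
qed

lemma wsum:
  fixes h :: "complex poly"
  assumes h: "h \<noteq> 0" and R: "R > 0" and nz: "\<And>z. norm z = R \<Longrightarrow> poly h z \<noteq> 0"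
  shows "(\<Sum>p\<in>{p\<in>UNIV. poly h p = 0}. winding_number (circlepath 0 R) p * of_int (zorder (poly h) p))
       = of_nat (nin R h)"
proof -
  have fin: "finite {p. poly h p = 0}" using poly_roots_finite[OF h] .
  have w: "winding_number (circlepath 0 R) p * of_int (zorder (poly h) p)
        = (if norm p < R then of_nat (order p h) else 0)" if "poly h p = 0" for p
  proof (cases "norm p < R")
    case True
    then have "winding_number (circlepath 0 R) p = 1" by (intro winding_number_circlepath) simp
    then show ?thesis using True zorder_poly[OF h] by simp
  next
    case False
    then have "norm p > R" using nz that by force
    then have "winding_number (circlepath 0 R) p = 0"
      by (intro winding_number_zero_outside[of _ "cball 0 R"]) (auto simp: R less_imp_le)
    then show ?thesis using False by simp
  qed
  have "(\<Sum>p\<in>{p\<in>UNIV. poly h p = 0}. winding_number (circlepath 0 R) p * of_int (zorder (poly h) p))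
      = (\<Sum>p\<in>{p. poly h p = 0}. (if norm p < R then of_nat (order p h) else 0))"
    by (intro sum.cong) (auto simp: w)
  also have "\<dots> = (\<Sum>p\<in>{p. poly h p = 0 \<and> norm p < R}. of_nat (order p h))"
    using fin by (simp add: sum.inter_filter[symmetric] conj_commute)
  also have "\<dots> = of_nat (nin R h)" by (simp add: nin_def)
  finally show ?thesis .
qed

lemma rouche_poly:
  fixes q g :: "complex poly"
  assumes R: "R > 0" and q: "q \<noteq> 0" and lt: "\<And>z. norm z = R \<Longrightarrow> norm (poly g z) < norm (poly q z)"
  shows "nin R (q + g) = nin R q"
proof -
  have nzq: "poly q z \<noteq> 0" if "norm z = R" for z using lt[OF that] by auto
  have nzqg: "poly (q + g) z \<noteq> 0" if "norm z = R" for z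
  proof
    assume "poly (q + g) z = 0"
    then have "poly q z = - poly g z" by (simp add: eq_neg_iff_add_eq_0)
    then show False using lt[OF that] by simp
  qed
  have qg: "q + g \<noteq> 0"
  proof
    assume "q + g = 0"
    then show False using nzqg[of "complex_of_real R"] R by simp
  qed
  have "(\<Sum>p\<in>{p\<in>UNIV. (\<lambda>p. poly q p + poly g p) p = 0}. winding_number (circlepath 0 R) p * zorder (\<lambda>p. poly q p + poly g p) p)
      = (\<Sum>p\<in>{p\<in>UNIV. poly q p = 0}. winding_number (circlepath 0 R) p * zorder (poly q) p)"
  proof (rule Rouche_theorem)
    show "finite {p \<in> UNIV. poly q p + poly g p = 0}"
      using poly_roots_finite[OF qg] by simp
    show "finite {p \<in> UNIV. poly q p = 0}" using poly_roots_finite[OF q] by simp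
    show "poly q holomorphic_on UNIV" "poly g holomorphic_on UNIV" by (intro holomorphic_intros)+
    show "\<forall>z\<in>path_image (circlepath 0 R). cmod (poly g z) < cmod (poly q z)"
      using lt R by auto
  qed auto
  moreover have "(\<lambda>p. poly q p + poly g p) = poly (q + g)" by auto
  ultimately have "of_nat (nin R (q + g)) = (of_nat (nin R q) :: complex)"
    using wsum[OF q R nzq] wsum[OF qg R nzqg] by simp
  then show ?thesis by simp
qed


definition Ppoly :: "nat \<Rightarrow> nat \<Rightarrow> (int \<Rightarrow> real) \<Rightarrow> complex poly" where
  "Ppoly p r c = (\<Sum>l\<in>{- int r..int p}. monom (complex_of_real (c l)) (nat (l + int r)))"

definition PM :: "nat \<Rightarrow> nat \<Rightarrow> (int \<Rightarrow> real) \<Rightarrow> complex \<Rightarrow> complex poly" where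
  "PM p r c M = Ppoly p r c + monom (- M) r"

lemma poly_Ppoly: "poly (Ppoly p r c) z = (\<Sum>l\<in>{- int r..int p}. complex_of_real (c l) * z ^ nat (l + int r))"
  by (simp add: Ppoly_def poly_sum poly_monom)

lemma pow_nat_shift:
  fixes z :: complex
  assumes "z \<noteq> 0" "l \<ge> - int r"
  shows "z ^ nat (l + int r) = z ^ r * z powi l"
proof -
  have "z ^ nat (l + int r) = z powi (l + int r)"
    using assms by (metis add.commute le_add_same_cancel2 le_minus_iff nat_0_le power_int_of_nat
        add.inverse_inverse minus_add_cancel neg_le_iff_le) 
  also have "\<dots> = z powi l * z powi int r" using assms by (simp add: power_int_add)
  finally show ?thesis by (simp add: power_int_of_nat mult.commute)
qed

lemma poly_Ppoly_AC: "z \<noteq> 0 \<Longrightarrow> poly (Ppoly p r c) z = z ^ r * AC p r c z"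
  unfolding poly_Ppoly AC_def sum_distrib_left
  by (intro sum.cong refl) (simp add: pow_nat_shift)

lemma poly_PM: "z \<noteq> 0 \<Longrightarrow> poly (PM p r c M) z = z ^ r * (AC p r c z - M)"
  by (simp add: PM_def poly_Ppoly_AC poly_monom algebra_simps)

lemma poly_Ppoly_0: "poly (Ppoly p r c) 0 = complex_of_real (c (- int r))"
proof -
  have "poly (Ppoly p r c) 0 = (\<Sum>l\<in>{- int r..int p}. (if l = - int r then complex_of_real (c l) else 0))"
    unfolding poly_Ppoly by (intro sum.cong refl) auto
  also have "\<dots> = complex_of_real (c (- int r))" by (simp add: sum.delta)
  finally show ?thesis .
qed

lemma Ppoly_nz: "c (- int r) \<noteq> 0 \<Longrightarrow> Ppoly p r c \<noteq> 0"
  using poly_Ppoly_0[of p r c] by auto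

lemma symbolA_AC: "symbolA p r c = AC p r c"
  by (simp add: symbolA_def AC_def fun_eq_iff)

lemma A4_use:
  assumes A4: "\<forall>\<theta>\<in>{-pi..pi} - {0}. symbolA p r c (cis \<theta>) \<noteq> 0"
    and z: "norm z = 1" "z \<noteq> 1"
  shows "AC p r c z \<noteq> 0"
proof -
  have z0: "z \<noteq> 0" using z by auto
  have zc: "z = cis (Arg z)" using cis_Arg[OF z0] z by (simp add: sgn_eq)
  have "Arg z \<noteq> 0" using zc z by auto
  then have "Arg z \<in> {-pi..pi} - {0}" using Arg_bounded[of z] by auto
  then show ?thesis using A4 zc symbolA_AC by metis
qed

lemma norm_poly_Ppoly_le: "norm z = 1 \<Longrightarrow> norm (poly (Ppoly p r c) z) \<le> (\<Sum>l\<in>{- int r..int p}. \<bar>c l\<bar>)"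
  unfolding poly_Ppoly
  by (rule order_trans[OF norm_sum]) (simp add: norm_mult norm_power)

lemma order_monom0:
  assumes "M \<noteq> 0"
  shows "order 0 (monom M n :: complex poly) = n"
proof -
  have "monom M n = smult M ([:- 0, 1:] ^ n)" by (simp add: monom_altdef)
  then show ?thesis using assms order_power_n_n[of "0::complex" n] by (simp add: order_smult)
qed

lemma nin_monom:
  assumes "M \<noteq> 0"
  shows "nin 1 (monom M n :: complex poly) = n"
proof -
  have E: "{z. poly (monom M n) z = 0 \<and> norm z < 1} = (if n = 0 then {} else {0})"
    using assms by (auto simp: poly_monom)
  show ?thesis using order_monom0[OF assms, of n] unfolding nin_def E
    by (cases "n = 0") auto
qed

lemma count_large:
  assumes M: "norm M > (\<Sum>l\<in>{- int r..int p}. \<bar>c l\<bar>)"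
  shows "nin 1 (PM p r c M) = r"
proof -
  have "0 \<le> (\<Sum>l\<in>{- int r..int p}. \<bar>c l\<bar>)" by (simp add: sum_nonneg)
  then have "norm M > 0" using M by linarith
  then have M0: "- M \<noteq> 0" by auto
  have "nin 1 (monom (- M) r + Ppoly p r c) = nin 1 (monom (- M) r)"
  proof (rule rouche_poly)
    show "monom (- M) r \<noteq> 0" using M0 by simp
    fix z :: complex assume z: "norm z = 1"
    show "norm (poly (Ppoly p r c) z) < norm (poly (monom (- M) r) z)"
      using norm_poly_Ppoly_le[OF z, of p r c] M z by (simp add: poly_monom norm_mult norm_power)
  qed simp
  then show ?thesis using nin_monom[OF M0] by (simp add: PM_def add.commute)
qed

lemma count_locconst:
  assumes M0: "\<And>z. norm z = 1 \<Longrightarrow> AC p r c z \<noteq> M0"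
  shows "\<exists>\<delta>>0. \<forall>M. norm (M - M0) < \<delta> \<longrightarrow> nin 1 (PM p r c M) = nin 1 (PM p r c M0)"
proof -
  have cont: "continuous_on (sphere 0 1) (\<lambda>z. norm (poly (PM p r c M0) z))"
    by (intro continuous_intros)
  obtain z0 where z0: "z0 \<in> sphere (0::complex) 1" and mn: "\<And>y. y \<in> sphere 0 1 \<Longrightarrow>
      norm (poly (PM p r c M0) z0) \<le> norm (poly (PM p r c M0) y)"
    using continuous_attains_inf[OF compact_sphere _ cont] by fastforce
  define \<delta> where "\<delta> = norm (poly (PM p r c M0) z0)"
  have z0n: "norm z0 = 1" "z0 \<noteq> 0" using z0 by auto
  have "\<delta> > 0" unfolding \<delta>_def using poly_PM[OF z0n(2)] M0[OF z0n(1)] z0n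
    by (simp add: norm_mult norm_power)
  moreover have "nin 1 (PM p r c M) = nin 1 (PM p r c M0)" if M: "norm (M - M0) < \<delta>" for M
  proof -
    have q0: "PM p r c M0 \<noteq> 0"
    proof
      assume "PM p r c M0 = 0"
      then show False using \<open>\<delta> > 0\<close> by (simp add: \<delta>_def)
    qed
    have "nin 1 (PM p r c M0 + monom (M0 - M) r) = nin 1 (PM p r c M0)"
    proof (rule rouche_poly[OF _ q0])
      fix z :: complex assume z: "norm z = 1"
      have "norm (poly (monom (M0 - M) r) z) = norm (M - M0)"
        using z by (simp add: poly_monom norm_mult norm_power norm_minus_commute)
      also have "\<dots> < \<delta>" by (rule M)
      also have "\<dots> \<le> norm (poly (PM p r c M0) z)" unfolding \<delta>_def using mn z by simp
      finally show "norm (poly (monom (M0 - M) r) z) < norm (poly (PM p r c M0) z)" .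
    qed simp
    moreover have "PM p r c M0 + monom (M0 - M) r = PM p r c M"
      by (simp add: PM_def add.assoc add_monom)
    ultimately show ?thesis by simp
  qed
  ultimately show ?thesis by blast
qed


lemma pderiv_sum': "pderiv (sum f A) = sum (\<lambda>x. pderiv (f x)) A"
  by (induct A rule: infinite_finite_induct) (simp_all add: pderiv_add)

lemma Ppoly_1: "poly (Ppoly p r c) 1 = complex_of_real (\<Sum>l\<in>{- int r..int p}. c l)"
  by (simp add: poly_Ppoly)

lemma Ppoly_deriv1:
  assumes A1a: "(\<Sum>l\<in>{- int r..int p}. c l) = 0"
    and A1b: "(\<Sum>l\<in>{- int r..int p}. of_int l * c l) = a"
  shows "poly (pderiv (Ppoly p r c)) 1 = complex_of_real a"
proof -
  have "poly (pderiv (Ppoly p r c)) 1 = (\<Sum>l\<in>{- int r..int p}. complex_of_real (of_int (l + int r) * c l))"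
    unfolding Ppoly_def pderiv_sum' pderiv_monom poly_sum
    by (intro sum.cong refl) (auto simp: poly_monom)
  also have "\<dots> = complex_of_real ((\<Sum>l\<in>{- int r..int p}. of_int l * c l) + of_nat r * (\<Sum>l\<in>{- int r..int p}. c l))"
    by (simp add: sum.distrib sum_distrib_left algebra_simps)
  also have "\<dots> = complex_of_real a" using A1a A1b by simp
  finally show ?thesis .
qed

lemma circle_zero_is_1:
  assumes A4: "\<forall>\<theta>\<in>{-pi..pi} - {0}. symbolA p r c (cis \<theta>) \<noteq> 0"
    and z: "norm z = 1" "poly (Ppoly p r c) z = 0"
  shows "z = 1"
proof (rule ccontr)
  assume "z \<noteq> 1"
  then have "AC p r c z \<noteq> 0" using A4_use[OF A4 z(1)] by blast
  moreover have "z \<noteq> 0" using z by auto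
  ultimately show False using poly_Ppoly_AC[of z p r c] z by simp
qed

lemma min_on_compact_pos:
  fixes f :: "complex \<Rightarrow> real"
  assumes "compact K" "continuous_on K f" "\<And>z. z \<in> K \<Longrightarrow> f z > 0"
  shows "\<exists>\<nu>>0. \<forall>z\<in>K. \<nu> \<le> f z"
proof (cases "K = {}")
  case True then show ?thesis by (intro exI[of _ 1]) auto
next
  case False
  obtain z0 where "z0 \<in> K" "\<And>y. y \<in> K \<Longrightarrow> f z0 \<le> f y"
    using continuous_attains_inf[OF assms(1) False assms(2)] by blast
  then show ?thesis using assms(3) by blast
qed

lemma count_small:
  assumes cr: "c (- int r) \<noteq> 0" and a_neg: "a < 0"
    and A1a: "(\<Sum>l\<in>{- int r..int p}. c l) = 0"
    and A1b: "(\<Sum>l\<in>{- int r..int p}. of_int l * c l) = a"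
    and A4: "\<forall>\<theta>\<in>{-pi..pi} - {0}. symbolA p r c (cis \<theta>) \<noteq> 0"
  shows "\<exists>t0>0. \<forall>t. 0 < t \<and> t < t0 \<longrightarrow> nin 1 (PM p r c (- complex_of_real t)) = nin 1 (Ppoly p r c)"
proof -
  define P where "P = Ppoly p r c"
  have P0: "P \<noteq> 0" unfolding P_def using Ppoly_nz[of c r p, OF cr] .
  have finZ: "finite {z. poly P z = 0}" using poly_roots_finite[OF P0] .
  define S where "S = insert (1/2) (norm ` {z. poly P z = 0 \<and> norm z < 1})"
  have finS: "finite S" unfolding S_def using finZ by auto
  define R where "R = (1 + Max S) / 2"
  have MS: "Max S < 1" using finS by (auto simp: S_def)
  have MS2: "1/2 \<le> Max S" using finS by (intro Max_ge) (auto simp: S_def)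
  have R1: "R < 1" "R > 0" using MS MS2 by (auto simp: R_def)
  have zin: "norm z < R" if "poly P z = 0" "norm z < 1" for z
  proof -
    have "norm z \<in> S" using that by (auto simp: S_def)
    then have "norm z \<le> Max S" using finS by auto
    then show ?thesis using MS by (auto simp: R_def)
  qed
  have circ: "z = 1" if "norm z = 1" "poly P z = 0" for z
    using circle_zero_is_1[OF A4] that by (auto simp: P_def)
  obtain \<mu> where \<mu>: "\<mu> > 0" "\<And>z. z \<in> sphere 0 R \<Longrightarrow> \<mu> \<le> norm (poly P z)"
  proof -
    have "\<exists>\<mu>>0. \<forall>z\<in>sphere 0 R. \<mu> \<le> norm (poly P z)"
    proof (rule min_on_compact_pos)
      show "continuous_on (sphere 0 R) (\<lambda>z. norm (poly P z))" by (intro continuous_intros)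
      fix z :: complex assume "z \<in> sphere 0 R"
      then have "norm z = R" by simp
      then have "poly P z \<noteq> 0" using zin[of z] R1 by fastforce
      then show "norm (poly P z) > 0" by simp
    qed simp
    then show ?thesis using that by blast
  qed
  have "poly P 1 = 0" unfolding P_def Ppoly_1 A1a by simp
  then obtain Q where PQ: "P = [:-1, 1:] * Q" using poly_eq_0_iff_dvd by blast
  have Q1: "poly Q 1 = complex_of_real a"
  proof -
    have "poly (pderiv P) 1 = poly Q 1" unfolding PQ pderiv_mult by (simp add: pderiv_pCons)
    then show ?thesis using Ppoly_deriv1[OF A1a A1b] by (simp add: P_def)
  qed
  define g where "g = (\<lambda>z. z ^ r / poly Q z)"
  have "isCont g 1" unfolding g_def using Q1 a_neg by (intro continuous_intros) auto
  moreover have "g 1 = 1 / complex_of_real a" using Q1 by (simp add: g_def)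
  moreover have "- 1 / a > 0" using a_neg by simp
  ultimately obtain \<eta> where \<eta>: "\<eta> > 0" "\<And>z. dist z 1 < \<eta> \<Longrightarrow> dist (g z) (1 / complex_of_real a) < - 1 / a"
    unfolding continuous_at_eps_delta by metis
  have Reg: "Re (g z) < 0" if "dist z 1 < \<eta>" for z
  proof -
    have "Re (g z) - 1 / a = Re (g z - 1 / complex_of_real a)" by simp
    also have "\<dots> \<le> norm (g z - 1 / complex_of_real a)" by (rule complex_Re_le_cmod)
    also have "\<dots> < - 1 / a" using \<eta>(2)[OF that] by (simp add: dist_norm)
    finally show ?thesis by simp
  qed
  define K where "K = {z::complex. R \<le> norm z \<and> norm z \<le> 1 \<and> \<eta> \<le> norm (z - 1)}"
  have Kc: "compact K"
  proof -
    have "K = cball 0 1 \<inter> {z. R \<le> norm z} \<inter> {z. \<eta> \<le> norm (z - 1)}" by (auto simp: K_def)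
    moreover have "closed {z::complex. R \<le> norm z}" by (intro closed_Collect_le continuous_intros)
    moreover have "closed {z::complex. \<eta> \<le> norm (z - 1)}" by (intro closed_Collect_le continuous_intros)
    ultimately show ?thesis by (metis compact_Int_closed compact_cball closed_Int)
  qed
  obtain \<nu> where \<nu>: "\<nu> > 0" "\<And>z. z \<in> K \<Longrightarrow> \<nu> \<le> norm (poly P z)"
  proof -
    have "\<exists>\<nu>>0. \<forall>z\<in>K. \<nu> \<le> norm (poly P z)"
    proof (rule min_on_compact_pos[OF Kc])
      show "continuous_on K (\<lambda>z. norm (poly P z))" by (intro continuous_intros)
      fix z :: complex assume z: "z \<in> K"
      have "poly P z \<noteq> 0"
      proof
        assume pz: "poly P z = 0"
        show False
        proof (cases "norm z < 1")
          case True then show False using zin[OF pz] z by (auto simp: K_def)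
        next
          case False
          then have "norm z = 1" using z by (auto simp: K_def)
          then have "z = 1" using circ pz by blast
          then show False using z \<eta> by (auto simp: K_def)
        qed
      qed
      then show "norm (poly P z) > 0" by simp
    qed
    then show ?thesis using that by blast
  qed
  define t0 where "t0 = min \<mu> \<nu>"
  have "t0 > 0" using \<mu> \<nu> by (simp add: t0_def)
  moreover have "nin 1 (PM p r c (- complex_of_real t)) = nin 1 P" if t: "0 < t" "t < t0" for t
  proof -
    have PMt: "PM p r c (- complex_of_real t) = P + monom (complex_of_real t) r"
      by (simp add: PM_def P_def)
    have polyPMt: "poly (PM p r c (- complex_of_real t)) z = poly P z + complex_of_real t * z ^ r" for z
      by (simp add: PMt poly_monom)
    have RP: "nin R (PM p r c (- complex_of_real t)) = nin R P"
      unfolding PMt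
    proof (rule rouche_poly[OF R1(2) P0])
      fix z :: complex assume z: "norm z = R"
      have "norm (poly (monom (complex_of_real t) r) z) = t * R ^ r"
        using z t by (simp add: poly_monom norm_mult norm_power)
      also have "\<dots> \<le> t" using R1 t by (simp add: power_le_one)
      also have "\<dots> < \<mu>" using t by (simp add: t0_def)
      also have "\<dots> \<le> norm (poly P z)" using \<mu>(2)[of z] z by simp
      finally show "norm (poly (monom (complex_of_real t) r) z) < norm (poly P z)" .
    qed
    have R1P: "nin R P = nin 1 P"
    proof -
      have "{z. poly P z = 0 \<and> norm z < R} = {z. poly P z = 0 \<and> norm z < 1}"
        using zin R1 by auto
      then show ?thesis by (simp add: nin_def)
    qed
    have noz: "poly (PM p r c (- complex_of_real t)) z \<noteq> 0" if z: "R \<le> norm z" "norm z < 1" for z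
    proof
      assume "poly (PM p r c (- complex_of_real t)) z = 0"
      then have E: "poly P z = - complex_of_real t * z ^ r" using polyPMt[of z]
        by (simp add: eq_neg_iff_add_eq_0)
      show False
      proof (cases "\<eta> \<le> norm (z - 1)")
        case True
        then have "z \<in> K" using z by (auto simp: K_def)
        then have "\<nu> \<le> norm (poly P z)" using \<nu> by blast
        also have "\<dots> = t * norm z ^ r" using E t by (simp add: norm_mult norm_power)
        also have "\<dots> \<le> t" using z t R1 by (simp add: power_le_one)
        also have "\<dots> < \<nu>" using t by (simp add: t0_def)
        finally show False by simp
      next
        case False
        then have d: "dist z 1 < \<eta>" by (simp add: dist_norm)
        have Qz: "poly Q z \<noteq> 0"
        proof
          assume "poly Q z = 0"
          then have "g z = 0" by (simp add: g_def)
          then show False using Reg[OF d] by simp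
        qed
        have "(z - 1) * poly Q z = - complex_of_real t * z ^ r" using E by (simp add: PQ algebra_simps)
        then have "z - 1 = - complex_of_real t * g z" using Qz by (simp add: g_def field_simps)
        then have "Re (z - 1) = Re (- complex_of_real t * g z)" by simp
        then have "Re z - 1 = - t * Re (g z)" by simp
        moreover have "- t * Re (g z) > 0" using t Reg[OF d] by (simp add: mult_pos_neg)
        ultimately have "Re z > 1" by simp
        then have "norm z > 1" using complex_Re_le_cmod[of z] by linarith
        then show False using z by simp
      qed
    qed
    have "nin 1 (PM p r c (- complex_of_real t)) = nin R (PM p r c (- complex_of_real t))"
    proof -
      have "{z. poly (PM p r c (- complex_of_real t)) z = 0 \<and> norm z < 1}
          = {z. poly (PM p r c (- complex_of_real t)) z = 0 \<and> norm z < R}"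
        using noz R1 by force
      then show ?thesis by (simp add: nin_def)
    qed
    then show ?thesis using RP R1P by simp
  qed
  ultimately show ?thesis unfolding P_def by blast
qed


definition rP :: "nat \<Rightarrow> (nat \<Rightarrow> real) \<Rightarrow> real poly" where
  "rP k alpha = (\<Sum>s\<le>k. monom (alpha s) s)"
definition sP :: "nat \<Rightarrow> (nat \<Rightarrow> real) \<Rightarrow> real poly" where
  "sP k beta = (\<Sum>s<k. monom (beta s) s)"
definition sPc :: "nat \<Rightarrow> (nat \<Rightarrow> real) \<Rightarrow> complex poly" where
  "sPc k beta = (\<Sum>s<k. monom (complex_of_real (beta s)) s)"

lemma rhoC_real: "rhoC k alpha (complex_of_real x) = complex_of_real (poly (rP k alpha) x)"
  by (simp add: rhoC_def rP_def poly_sum poly_monom)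
lemma sigC_real: "sigC k beta (complex_of_real x) = complex_of_real (poly (sP k beta) x)"
  by (simp add: sigC_def sP_def poly_sum poly_monom)
lemma sigC_poly: "sigC k beta z = poly (sPc k beta) z"
  by (simp add: sigC_def sPc_def poly_sum poly_monom)

lemma small_tau:
  assumes A2a: "(\<Sum>s\<le>k. alpha s) = 0"
    and A2b: "(\<Sum>s\<le>k. of_nat s * alpha s) = (\<Sum>s<k. beta s)"
    and b0: "(\<Sum>s<k. beta s) \<noteq> 0" and lam: "lam > 0" and t0: "t0 > 0"
  shows "\<exists>x t. x > 1 \<and> poly (sP k beta) x \<noteq> 0 \<and> 0 < t \<and> t < t0 \<and>
     poly (rP k alpha) x / (lam * poly (sP k beta) x) = t"
proof -
  have "poly (rP k alpha) 1 = 0" using A2a by (simp add: rP_def poly_sum poly_monom)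
  then obtain r1 where r1: "rP k alpha = [:-1, 1:] * r1" using poly_eq_0_iff_dvd by blast
  have "poly (pderiv (rP k alpha)) 1 = poly r1 1" unfolding r1 pderiv_mult by (simp add: pderiv_pCons)
  moreover have "poly (pderiv (rP k alpha)) 1 = (\<Sum>s\<le>k. of_nat s * alpha s)"
    unfolding rP_def pderiv_sum' pderiv_monom poly_sum by (simp add: poly_monom)
  moreover have sP1: "poly (sP k beta) 1 = (\<Sum>s<k. beta s)" by (simp add: sP_def poly_sum poly_monom)
  ultimately have r11: "poly r1 1 = poly (sP k beta) 1" using A2b by simp
  define h where "h = (\<lambda>x. poly r1 x / poly (sP k beta) x)"
  have "isCont h 1" unfolding h_def using sP1 b0 by (intro continuous_intros) auto
  moreover have "h 1 = 1" using r11 sP1 b0 by (simp add: h_def)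
  ultimately obtain d where d: "d > 0" "\<And>x. dist x 1 < d \<Longrightarrow> dist (h x) 1 < 1/2"
    unfolding continuous_at_eps_delta by (metis zero_less_divide_1_iff zero_less_numeral)
  define x where "x = 1 + min (d/2) (t0 * lam / 4)"
  have xd: "dist x 1 < d" using d t0 lam by (simp add: x_def dist_real_def)
  have hx: "\<bar>h x - 1\<bar> < 1/2" using d(2)[OF xd] by (simp add: dist_real_def)
  have sx: "poly (sP k beta) x \<noteq> 0"
  proof
    assume "poly (sP k beta) x = 0"
    then have "h x = 0" by (simp add: h_def)
    then show False using hx by simp
  qed
  have x1: "x > 1" using d t0 lam by (simp add: x_def)
  define t where "t = (x - 1) * h x / lam"
  have "poly (rP k alpha) x = (x - 1) * h x * poly (sP k beta) x"
    using sx by (simp add: h_def r1 field_simps)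
  then have eq: "poly (rP k alpha) x / (lam * poly (sP k beta) x) = t"
    using sx lam by (simp add: t_def field_simps)
  have "h x > 0" using hx by linarith
  then have tpos: "t > 0" using x1 lam by (simp add: t_def)
  have "t < t0"
  proof -
    have "h x < 3/2" using hx by linarith
    then have "(x - 1) * h x \<le> (x - 1) * (3/2)" using x1 by (intro mult_left_mono) auto
    also have "\<dots> \<le> (t0 * lam / 4) * (3/2)" using x1 by (intro mult_right_mono) (auto simp: x_def)
    also have "\<dots> < t0 * lam" using t0 lam by simp
    finally show ?thesis using lam by (simp add: t_def field_simps)
  qed
  show ?thesis using x1 sx tpos \<open>t < t0\<close> eq by blast
qed

lemma big_tau:
  assumes k1: "k \<ge> 1" and ak: "alpha k = 1" and lam: "lam > 0"
    and b0: "(\<Sum>s<k. beta s) \<noteq> 0" and B: "B \<ge> 0"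
  shows "\<exists>x>1. poly (sP k beta) x \<noteq> 0 \<and> B < \<bar>poly (rP k alpha) x / (lam * poly (sP k beta) x)\<bar>"
proof -
  have sP1: "poly (sP k beta) 1 = (\<Sum>s<k. beta s)" by (simp add: sP_def poly_sum poly_monom)
  then have sP0: "sP k beta \<noteq> 0" using b0 by auto
  define F where "F = {x. poly (sP k beta) x = 0}"
  have finF: "finite F" unfolding F_def using poly_roots_finite[OF sP0] .
  define Sa where "Sa = (\<Sum>s<k. \<bar>alpha s\<bar>)"
  define Sb where "Sb = (\<Sum>s<k. \<bar>beta s\<bar>)"
  have Sa0: "Sa \<ge> 0" "Sb \<ge> 0" by (simp_all add: Sa_def Sb_def sum_nonneg)
  define X where "X = 1 + Sa + lam * B * Sb"
  define x where "x = max X (Max (insert 0 F)) + 1"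
  have xX: "x > X" by (simp add: x_def)
  have X1: "X \<ge> 1" using Sa0 B lam by (simp add: X_def)
  have x1: "x > 1" using xX X1 by simp
  have xF: "x \<notin> F"
  proof
    assume "x \<in> F"
    then have "x \<le> Max (insert 0 F)" using finF by simp
    then show False by (simp add: x_def)
  qed
  then have sx: "poly (sP k beta) x \<noteq> 0" by (simp add: F_def)
  have pw: "x ^ s \<le> x ^ (k - 1)" if "s < k" for s
    using x1 that by (intro power_increasing) auto
  have "\<bar>\<Sum>s<k. alpha s * x ^ s\<bar> \<le> (\<Sum>s<k. \<bar>alpha s\<bar> * x ^ (k - 1))"
    by (rule order_trans[OF sum_abs]) (use x1 pw in \<open>auto intro!: sum_mono mult_left_mono simp: abs_mult\<close>)
  also have "\<dots> = Sa * x ^ (k - 1)" by (simp add: Sa_def sum_distrib_right)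
  finally have ra: "\<bar>\<Sum>s<k. alpha s * x ^ s\<bar> \<le> Sa * x ^ (k - 1)" .
  have "poly (rP k alpha) x = x ^ k + (\<Sum>s<k. alpha s * x ^ s)"
    using ak by (simp add: rP_def poly_sum poly_monom lessThan_Suc_atMost[symmetric])
  moreover have "x ^ k = x * x ^ (k - 1)" using k1 by (simp add: power_eq_if)
  ultimately have rlow: "\<bar>poly (rP k alpha) x\<bar> \<ge> x ^ (k - 1) * (x - Sa)"
    using ra x1 by (simp add: algebra_simps)
  have "\<bar>poly (sP k beta) x\<bar> \<le> (\<Sum>s<k. \<bar>beta s\<bar> * x ^ (k - 1))"
    unfolding sP_def poly_sum poly_monom
    by (rule order_trans[OF sum_abs]) (use x1 pw in \<open>auto intro!: sum_mono mult_left_mono simp: abs_mult\<close>)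
  also have "\<dots> = Sb * x ^ (k - 1)" by (simp add: Sb_def sum_distrib_right)
  finally have sup: "\<bar>poly (sP k beta) x\<bar> \<le> Sb * x ^ (k - 1)" .
  have xp: "x ^ (k - 1) > 0" using x1 by simp
  have "B * lam * \<bar>poly (sP k beta) x\<bar> \<le> B * lam * (Sb * x ^ (k - 1))"
    using sup B lam by (intro mult_left_mono) auto
  also have "\<dots> = x ^ (k - 1) * (lam * B * Sb)" by (simp add: algebra_simps)
  also have "\<dots> < x ^ (k - 1) * (x - Sa)" using xX xp by (intro mult_strict_left_mono) (auto simp: X_def)
  also have "\<dots> \<le> \<bar>poly (rP k alpha) x\<bar>" by (rule rlow)
  finally have "B * (lam * \<bar>poly (sP k beta) x\<bar>) < \<bar>poly (rP k alpha) x\<bar>" by (simp add: algebra_simps)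
  moreover have "lam * \<bar>poly (sP k beta) x\<bar> > 0" using lam sx by simp
  ultimately have "B < \<bar>poly (rP k alpha) x\<bar> / (lam * \<bar>poly (sP k beta) x\<bar>)"
    by (simp add: pos_less_divide_eq)
  then show ?thesis using x1 sx lam by (intro exI[of _ x]) (simp add: abs_mult)
qed


theorem count_r:
  assumes k1: "k \<ge> 1" and ak: "alpha k = 1" and lam: "lam > 0"
    and st: "l2_stable p r c k alpha beta lam"
    and cr: "c (- int r) \<noteq> 0" and a_neg: "a < 0"
    and A1a: "(\<Sum>l\<in>{- int r..int p}. c l) = 0"
    and A1b: "(\<Sum>l\<in>{- int r..int p}. of_int l * c l) = a"
    and A2a: "(\<Sum>s\<le>k. alpha s) = 0"
    and A2b: "(\<Sum>s\<le>k. of_nat s * alpha s) = (\<Sum>s<k. beta s)"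
    and A4: "\<forall>\<theta>\<in>{-pi..pi} - {0}. symbolA p r c (cis \<theta>) \<noteq> 0"
  shows "nin 1 (Ppoly p r c) = r"
proof -
  have b0: "(\<Sum>s<k. beta s) \<noteq> 0" using sig1_nz[of k alpha lam p r c beta, OF k1 ak lam st A1a A2a A2b] .
  define Mf where "Mf = (\<lambda>\<tau>. - rhoC k alpha \<tau> / (complex_of_real lam * sigC k beta \<tau>))"
  define D where "D = {\<tau>::complex. 1 < norm \<tau>} - {\<tau>. sigC k beta \<tau> = 0}"
  define N where "N = (\<lambda>\<tau>. nin 1 (PM p r c (Mf \<tau>)))"
  have sPc0: "sPc k beta \<noteq> 0"
  proof
    assume "sPc k beta = 0"
    then have "sigC k beta 1 = 0" by (simp add: sigC_poly)
    then show False using b0 by (simp add: sigC_def flip: of_real_sum)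
  qed
  have conD: "connected D"
  proof -
    have "{\<tau>::complex. 1 < norm \<tau>} = - cball 0 1" by auto
    then have c1: "connected {\<tau>::complex. 1 < norm \<tau>}" "open {\<tau>::complex. 1 < norm \<tau>}"
      by (auto intro!: connected_complement_bounded_convex)
    have "finite {\<tau>. sigC k beta \<tau> = 0}" using poly_roots_finite[OF sPc0] by (simp add: sigC_poly)
    then show ?thesis unfolding D_def by (intro connected_open_delete_finite c1) auto
  qed
  have loc: "\<forall>\<tau>\<in>D. eventually (\<lambda>\<tau>'. N \<tau> = N \<tau>') (at \<tau> within D)"
  proof
    fix \<tau> assume \<tau>: "\<tau> \<in> D"
    then have tn: "norm \<tau> > 1" and ts: "sigC k beta \<tau> \<noteq> 0" by (auto simp: D_def)
    have avoid: "AC p r c \<kappa> \<noteq> Mf \<tau>" if "norm \<kappa> = 1" for \<kappa>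
    proof
      assume E: "AC p r c \<kappa> = Mf \<tau>"
      have "rhoC k alpha \<tau> + complex_of_real lam * sigC k beta \<tau> * AC p r c \<kappa> = 0"
        unfolding E Mf_def using ts lam by (simp add: field_simps)
      then show False using vonN[OF k1 ak lam st that tn] by blast
    qed
    obtain \<delta> where \<delta>: "\<delta> > 0" "\<And>M. norm (M - Mf \<tau>) < \<delta> \<Longrightarrow> N \<tau> = nin 1 (PM p r c M)"
      using count_locconst[of p r c "Mf \<tau>"] avoid unfolding N_def by metis
    have "isCont Mf \<tau>" unfolding Mf_def rhoC_def sigC_def using ts lam
      by (intro continuous_intros) (auto simp: sigC_def)
    then have "(Mf \<longlongrightarrow> Mf \<tau>) (at \<tau>)" by (simp add: isCont_def)
    then have "eventually (\<lambda>\<tau>'. dist (Mf \<tau>') (Mf \<tau>) < \<delta>) (at \<tau>)" using \<delta>(1) by (rule tendstoD)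
    then have "eventually (\<lambda>\<tau>'. N \<tau> = N \<tau>') (at \<tau>)"
      by eventually_elim (use \<delta>(2) in \<open>auto simp: dist_norm N_def\<close>)
    then show "eventually (\<lambda>\<tau>'. N \<tau> = N \<tau>') (at \<tau> within D)"
      by (rule filter_leD[OF at_le[OF subset_UNIV], rotated])
  qed
  obtain xb where xb: "xb > 1" "poly (sP k beta) xb \<noteq> 0"
    "(\<Sum>l\<in>{- int r..int p}. \<bar>c l\<bar>) < \<bar>poly (rP k alpha) xb / (lam * poly (sP k beta) xb)\<bar>"
    using big_tau[of k alpha lam beta, OF k1 ak lam b0, of "\<Sum>l\<in>{- int r..int p}. \<bar>c l\<bar>"] by (auto simp: sum_nonneg)
  have MfR: "Mf (complex_of_real x) = - complex_of_real (poly (rP k alpha) x / (lam * poly (sP k beta) x))" for x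
    by (simp add: Mf_def rhoC_real sigC_real)
  have Db: "complex_of_real xb \<in> D" using xb by (auto simp: D_def sigC_real)
  have Nb: "N (complex_of_real xb) = r" unfolding N_def MfR
    by (rule count_large) (simp only: norm_minus_cancel norm_of_real xb(3))
  obtain t0 where t0: "t0 > 0" "\<And>t. 0 < t \<and> t < t0 \<Longrightarrow> nin 1 (PM p r c (- complex_of_real t)) = nin 1 (Ppoly p r c)"
    using count_small[where c=c and r=r and a=a and p=p, OF cr a_neg A1a A1b A4] by blast
  obtain xs t where xs: "xs > 1" "poly (sP k beta) xs \<noteq> 0" "0 < t" "t < t0"
     "poly (rP k alpha) xs / (lam * poly (sP k beta) xs) = t"
    using small_tau[where k=k and alpha=alpha and beta=beta and lam=lam, OF A2a A2b b0 lam t0(1)] by blast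
  have Ds: "complex_of_real xs \<in> D" using xs by (auto simp: D_def sigC_real)
  have Ns: "N (complex_of_real xs) = nin 1 (Ppoly p r c)" unfolding N_def MfR xs(5)
    using t0(2) xs by blast
  have "N (complex_of_real xb) = N (complex_of_real xs)"
    by (rule connected_local_const[OF conD Db Ds loc])
  then show ?thesis using Nb Ns by simp
qed


definition op :: "complex poly \<Rightarrow> (nat \<Rightarrow> complex) \<Rightarrow> nat \<Rightarrow> complex" where
  "op q x i = (\<Sum>m\<le>degree q. coeff q m * x (i + m))"

lemma op_bound: "degree q \<le> N \<Longrightarrow> op q x i = (\<Sum>m\<le>N. coeff q m * x (i + m))"
  unfolding op_def by (rule sum.mono_neutral_left) (auto simp: coeff_eq_0)

lemma op_add: "op (q1 + q2) x i = op q1 x i + op q2 x i"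
proof -
  define N where "N = max (degree q1) (degree q2)"
  have "degree (q1 + q2) \<le> N" unfolding N_def by (rule degree_add_le_max)
  then show ?thesis
    using op_bound[of q1 N] op_bound[of q2 N] op_bound[of "q1 + q2" N]
    by (simp add: N_def sum.distrib algebra_simps)
qed

lemma op_smult: "op (smult a q) x i = a * op q x i"
  unfolding op_def by (simp add: sum_distrib_left algebra_simps)

lemma op_zero[simp]: "op 0 x i = 0" by (simp add: op_def)

lemma op_pCons: "op (pCons a p) y i = a * y i + op p y (Suc i)"
proof -
  have d: "degree (pCons a p) \<le> Suc (degree p)" by (simp add: degree_pCons_le)
  have "op (pCons a p) y i = (\<Sum>m\<le>Suc (degree p). coeff (pCons a p) m * y (i + m))"
    by (rule op_bound[OF d])
  also have "\<dots> = a * y i + (\<Sum>m\<le>degree p. coeff p m * y (Suc i + m))"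
    by (subst sum.atMost_Suc_shift) simp
  finally show ?thesis by (simp add: op_def)
qed

lemma op_one[simp]: "op 1 x i = x i"
  by (simp add: op_def)

lemma op_mult: "op (q1 * q2) x i = op q1 (op q2 x) i"
proof (induction q1 arbitrary: i)
  case 0 then show ?case by simp
next
  case (pCons a p)
  have "op (pCons a p * q2) x i = op (smult a q2 + pCons 0 (p * q2)) x i" by simp
  also have "\<dots> = a * op q2 x i + op (p * q2) x (Suc i)" by (simp add: op_add op_smult op_pCons)
  also have "\<dots> = a * op q2 x i + op p (op q2 x) (Suc i)" using pCons.IH by simp
  also have "\<dots> = op (pCons a p) (op q2 x) i" by (simp add: op_pCons)
  finally show ?case .
qed

lemma op_lin: "op [:- z, 1:] x i = x (Suc i) - z * x i"
  by (simp add: op_pCons)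

lemma op_monom: "op (monom a n) x i = a * x (i + n)"
proof -
  have "op (monom a n) x i = (\<Sum>m\<le>n. coeff (monom a n) m * x (i + m))"
    by (rule op_bound) (simp add: degree_monom_le)
  also have "\<dots> = (\<Sum>m\<le>n. (if n = m then a * x (i + m) else 0))"
    by (intro sum.cong refl) (simp add: coeff_monom)
  also have "\<dots> = a * x (i + n)" by (simp add: sum.delta)
  finally show ?thesis .
qed

lemma op_sum: "op (\<Sum>l\<in>A. f l) x i = (\<Sum>l\<in>A. op (f l) x i)"
  by (induct A rule: infinite_finite_induct) (simp_all add: op_add)

lemma op_tendsto0:
  assumes "x \<longlonglongrightarrow> 0"
  shows "op q x \<longlonglongrightarrow> 0"
proof -
  have "(\<lambda>i. \<Sum>m\<le>degree q. coeff q m * x (i + m)) \<longlonglongrightarrow> (\<Sum>m\<le>degree q. coeff q m * 0)"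
  proof (intro tendsto_intros)
    fix m show "(\<lambda>i. x (i + m)) \<longlonglongrightarrow> 0" using assms by (rule LIMSEQ_ignore_initial_segment)
  qed
  then show ?thesis by (simp add: op_def[abs_def])
qed


definition expdec :: "(nat \<Rightarrow> complex) \<Rightarrow> bool" where
  "expdec x \<longleftrightarrow> (\<exists>C q. 0 < q \<and> q < 1 \<and> (\<forall>j. norm (x j) \<le> C * q ^ j))"

lemma expdec_C0: "(\<forall>j. norm (x j) \<le> C * q ^ j) \<Longrightarrow> C \<ge> 0"
  by (metis mult.right_neutral norm_ge_zero order_trans power_0)

lemma fwd_decay:
  assumes z: "norm z < 1" and y: "expdec y" and rec: "\<And>i. x (Suc i) - z * x i = y i"
  shows "expdec x"
proof -
  obtain C q where q: "0 < q" "q < 1" and Cq: "\<And>j. norm (y j) \<le> C * q ^ j"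
    using y unfolding expdec_def by blast
  have C0: "C \<ge> 0" using expdec_C0[of y C q] Cq by blast
  define q2 where "q2 = (max (norm z) q + 1) / 2"
  have q2: "0 < q2" "q2 < 1" "norm z < q2" "q \<le> q2" using q z by (auto simp: q2_def)
  define K where "K = max (norm (x 0)) (C / (q2 - norm z))"
  have d: "q2 - norm z > 0" using q2 by simp
  have "C / (q2 - norm z) \<le> K" by (simp add: K_def)
  then have K1: "C \<le> K * (q2 - norm z)" by (simp add: pos_divide_le_eq[OF d])
  have "norm (x j) \<le> K * q2 ^ j" for j
  proof (induction j)
    case 0 then show ?case by (simp add: K_def)
  next
    case (Suc j)
    have "x (Suc j) = z * x j + y j" using rec[of j] by (simp add: algebra_simps)
    then have "norm (x (Suc j)) \<le> norm z * norm (x j) + norm (y j)"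
      by (metis norm_mult norm_triangle_ineq)
    also have "\<dots> \<le> norm z * (K * q2 ^ j) + C * q2 ^ j"
      using Suc.IH Cq[of j] power_mono[OF q2(4), of j] q C0
      by (intro add_mono mult_left_mono) (auto intro: order_trans mult_left_mono)
    also have "\<dots> = q2 ^ j * (norm z * K + C)" by (simp add: algebra_simps)
    also have "\<dots> \<le> q2 ^ j * (K * q2)" using K1 q2 by (intro mult_left_mono) (auto simp: algebra_simps)
    also have "\<dots> = K * q2 ^ Suc j" by (simp add: algebra_simps)
    finally show ?case .
  qed
  then show ?thesis unfolding expdec_def using q2 by blast
qed

lemma bwd_solve:
  fixes z :: complex
  assumes z: "norm z \<ge> 1" and f: "expdec f"
  shows "\<exists>v. expdec v \<and> (\<forall>i. v (Suc i) - z * v i = f i)"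
proof -
  obtain C q where q: "0 < q" "q < 1" and Cq: "\<And>j. norm (f j) \<le> C * q ^ j"
    using f unfolding expdec_def by blast
  have C0: "C \<ge> 0" using expdec_C0[of f C q] Cq by blast
  have z0: "z \<noteq> 0" using z by auto
  define g where "g = (\<lambda>i n. f (i + n) / z ^ Suc n)"
  have gb: "norm (g i n) \<le> C * q ^ i * q ^ n" for i n
  proof -
    have "norm (g i n) = norm (f (i + n)) / norm z ^ Suc n" by (simp add: g_def norm_divide norm_power norm_mult)
    also have "\<dots> \<le> norm (f (i + n)) / 1"
    proof -
      have "1 \<le> norm z ^ Suc n" by (rule one_le_power[OF z])
      then show ?thesis by (intro divide_left_mono) auto
    qed
    also have "\<dots> = norm (f (i + n))" by simp
    also have "\<dots> \<le> C * q ^ (i + n)" by (rule Cq)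
    finally show ?thesis by (simp add: power_add algebra_simps)
  qed
  have sg: "summable (\<lambda>n. C * q ^ i * q ^ n)" for i
    using q by (intro summable_mult summable_geometric) simp
  have sm: "summable (g i)" for i
    by (rule summable_comparison_test[OF _ sg[of i]]) (use gb in blast)
  define v where "v = (\<lambda>i. - suminf (g i))"
  have "v (Suc i) - z * v i = f i" for i
  proof -
    have "(\<Sum>n. g i (Suc n)) = suminf (g i) - g i 0" by (rule suminf_split_head[OF sm])
    moreover have "(\<lambda>n. g i (Suc n)) = (\<lambda>n. g (Suc i) n / z)" by (simp add: g_def fun_eq_iff field_simps)
    moreover have "(\<Sum>n. g (Suc i) n / z) = suminf (g (Suc i)) / z" by (rule suminf_divide[OF sm])
    ultimately have "suminf (g (Suc i)) / z = suminf (g i) - f i / z" by (simp add: g_def)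
    then have "suminf (g (Suc i)) = z * suminf (g i) - f i" using z0 by (simp add: field_simps)
    then show ?thesis by (simp add: v_def)
  qed
  moreover have "norm (v i) \<le> (C / (1 - q)) * q ^ i" for i
  proof -
    have "norm (v i) \<le> (\<Sum>n. C * q ^ i * q ^ n)" unfolding v_def norm_minus_cancel
      by (rule norm_suminf_le[OF gb sg])
    also have "\<dots> = C * q ^ i * (1 / (1 - q))"
      using q by (simp add: suminf_mult suminf_geometric summable_geometric)
    finally show ?thesis by simp
  qed
  ultimately show ?thesis unfolding expdec_def using q by blast
qed

lemma fo_zero:
  fixes v :: "nat \<Rightarrow> complex"
  assumes z: "norm z \<ge> 1" and rec: "\<And>i. v (Suc i) = z * v i" and lim: "v \<longlonglongrightarrow> 0"
  shows "v i = 0"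
proof -
  have ge: "norm (v i) \<le> norm (v (i + n))" for n
  proof (induction n)
    case 0 then show ?case by simp
  next
    case (Suc n)
    have "norm (v (i + Suc n)) = norm z * norm (v (i + n))" by (simp add: rec norm_mult)
    also have "\<dots> \<ge> norm (v (i + n))" using z by (simp add: mult_le_cancel_right1)
    finally show ?case using Suc.IH by simp
  qed
  have "(\<lambda>n. norm (v (n + i))) \<longlonglongrightarrow> 0"
    using tendsto_norm_zero[OF LIMSEQ_ignore_initial_segment[OF lim, of i]] .
  then have "norm (v i) \<le> 0"
    by (rule LIMSEQ_le_const) (use ge in \<open>auto simp: add.commute\<close>)
  then show ?thesis by simp
qed

definition linprod :: "complex multiset \<Rightarrow> complex poly" where
  "linprod S = (\<Prod>z\<in>#S. [:- z, 1:])"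

lemma linprod_add: "linprod (add_mset z S) = [:- z, 1:] * linprod S"
  by (simp add: linprod_def)

lemma linprod_deg: "degree (linprod S) = size S \<and> coeff (linprod S) (size S) = 1"
proof (induction S)
  case empty then show ?case by (simp add: linprod_def)
next
  case (add z S)
  have nz: "linprod S \<noteq> 0" using add.IH by auto
  have "degree ([:- z, 1:] * linprod S) = degree [:- z, 1:] + degree (linprod S)"
    by (rule degree_mult_eq) (use nz in auto)
  then have d: "degree (linprod (add_mset z S)) = Suc (size S)"
    using add.IH by (simp only: linprod_add) simp
  moreover have "lead_coeff (linprod (add_mset z S)) = 1"
    using add.IH by (simp only: linprod_add lead_coeff_mult) simp
  ultimately show ?case by simp
qed

lemma op_linprod_0:
  assumes "\<And>m. m < size S \<Longrightarrow> x m = 0"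
  shows "op (linprod S) x 0 = x (size S)"
proof -
  have "op (linprod S) x 0 = (\<Sum>m\<le>size S. coeff (linprod S) m * x m)"
    using linprod_deg[of S] by (simp add: op_def)
  also have "\<dots> = (\<Sum>m<size S. coeff (linprod S) m * x m) + coeff (linprod S) (size S) * x (size S)"
    by (simp add: lessThan_Suc_atMost[symmetric])
  also have "\<dots> = coeff (linprod S) (size S) * x (size S)"
    using assms by simp
  also have "\<dots> = x (size S)" using linprod_deg[of S] by simp
  finally show ?thesis .
qed

lemma op_linprod_add: "op (linprod (add_mset z S)) y i = op (linprod S) y (Suc i) - z * op (linprod S) y i"
  by (simp only: linprod_add op_mult op_lin)

lemma lp_U:
  assumes "\<forall>z\<in>#S. norm z \<ge> 1" "\<And>i. op (linprod S) y i = 0" "y \<longlonglongrightarrow> 0"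
  shows "y i = 0"
  using assms
proof (induction S arbitrary: i)
  case empty then show ?case using empty.prems(2)[of i] by (simp add: linprod_def)
next
  case (add z S)
  define v where "v = op (linprod S) y"
  have "v j = 0" for j
  proof (rule fo_zero[of z])
    show "norm z \<ge> 1" using add.prems by simp
    show "v (Suc j) = z * v j" for j using add.prems(2)[of j] by (simp add: op_linprod_add v_def)
    show "v \<longlonglongrightarrow> 0" unfolding v_def by (rule op_tendsto0[OF add.prems(3)])
  qed
  then show ?case using add.IH add.prems by (simp add: v_def)
qed

lemma lp_G:
  assumes "\<forall>z\<in>#S. norm z \<ge> 1" "expdec f"
  shows "\<exists>y. expdec y \<and> (\<forall>i. op (linprod S) y i = f i)"
  using assms
proof (induction S arbitrary: f)
  case empty then show ?case by (auto simp: linprod_def)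
next
  case (add z S)
  obtain v where v: "expdec v" "\<And>i. v (Suc i) - z * v i = f i"
    using bwd_solve[of z f] add.prems by auto
  obtain y where y: "expdec y" "\<And>i. op (linprod S) y i = v i" using add.IH[of v] add.prems v by auto
  show ?case using y v by (intro exI[of _ y]) (simp add: op_linprod_add)
qed

lemma lp_H:
  assumes "\<forall>z\<in>#S. norm z < 1" "\<And>i. op (linprod S) x i = y i" "expdec y"
  shows "expdec x"
  using assms
proof (induction S arbitrary: y)
  case empty then show ?case using empty.prems(2) by (simp add: linprod_def fun_eq_iff[symmetric])
next
  case (add z S)
  define v where "v = op (linprod S) x"
  have "expdec v"
  proof (rule fwd_decay[of z y v])
    show "norm z < 1" using add.prems by simp
    show "v (Suc i) - z * v i = y i" for i using add.prems(2)[of i] by (simp add: op_linprod_add v_def)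
  qed (rule add.prems(3))
  then show ?case using add.IH[of v] add.prems by (simp add: v_def)
qed

lemma lp_I: "\<exists>x. (\<forall>i. op (linprod S) x i = y i) \<and> (\<forall>i<size S. x i = 0)"
proof (induction S arbitrary: y)
  case empty then show ?case by (auto simp: linprod_def)
next
  case (add z S)
  define v where "v = rec_nat 0 (\<lambda>i vi. z * vi + y i)"
  have v0: "v 0 = 0" and vS: "\<And>i. v (Suc i) = z * v i + y i" by (simp_all add: v_def)
  obtain x where x: "\<And>i. op (linprod S) x i = v i" "\<And>i. i < size S \<Longrightarrow> x i = 0"
    using add.IH[of v] by blast
  have "x (size S) = 0" using op_linprod_0[of S x] x v0 by simp
  then have "\<forall>i<size (add_mset z S). x i = 0" using x(2) less_Suc_eq by auto
  moreover have "op (linprod (add_mset z S)) x i = y i" for i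
    by (simp add: op_linprod_add x(1) vS)
  ultimately show ?case by blast
qed

lemma lp_Z:
  assumes "\<And>i. op (linprod S) x i = 0" "\<And>i. i < size S \<Longrightarrow> x i = 0"
  shows "x i = 0"
  using assms
proof (induction S arbitrary: i)
  case empty then show ?case using empty.prems(1)[of i] by (simp add: linprod_def)
next
  case (add z S)
  define v where "v = op (linprod S) x"
  have v0: "v 0 = 0" unfolding v_def using op_linprod_0[of S x] add.prems(2) by simp
  have vS: "v (Suc j) = z * v j" for j using add.prems(1)[of j] by (simp add: op_linprod_add v_def)
  have "v j = 0" for j by (induction j) (simp_all add: v0 vS)
  then show ?case using add.IH add.prems(2) by (simp add: v_def)
qed


lemma op_Ppoly: "op (Ppoly p r c) x j = (\<Sum>l\<in>{- int r..int p}. complex_of_real (c l) * x (j + nat (l + int r)))"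
  unfolding Ppoly_def op_sum op_monom by simp

lemma nat_shift: "l \<in> {- int r..int p} \<Longrightarrow> nat (int j + l + int r) = j + nat (l + int r)"
  by auto

lemma size_Rin:
  assumes "P \<noteq> 0"
  shows "size (filter_mset (\<lambda>z. norm z < 1) (proots P)) = nin 1 P"
proof -
  have "size (filter_mset (\<lambda>z. norm z < 1) (proots P))
      = (\<Sum>z\<in>set_mset (filter_mset (\<lambda>z. norm z < 1) (proots P)). count (filter_mset (\<lambda>z. norm z < 1) (proots P)) z)"
    by (simp add: size_multiset_overloaded_eq)
  also have "\<dots> = (\<Sum>z\<in>{z. poly P z = 0 \<and> norm z < 1}. order z P)"
    using assms by (intro sum.cong) auto
  finally show ?thesis by (simp add: nin_def)
qed

lemma expdec_zero: "expdec (\<lambda>_. 0)"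
  unfolding expdec_def by (intro exI[of _ 0] exI[of _ "1/2"]) simp

lemma expdec_tendsto: "expdec x \<Longrightarrow> x \<longlonglongrightarrow> 0"
proof -
  assume "expdec x"
  then obtain C q where q: "0 < q" "q < 1" and b: "\<And>j. norm (x j) \<le> C * q ^ j"
    unfolding expdec_def by blast
  have "(\<lambda>j. q ^ j) \<longlonglongrightarrow> 0" using q by (intro LIMSEQ_power_zero) auto
  then have g0: "(\<lambda>j. C * q ^ j) \<longlonglongrightarrow> 0" by (rule tendsto_mult_right_zero)
  show ?thesis by (rule Lim_null_comparison[OF always_eventually g0]) (use b in blast)
qed

lemma expdec_shift_scale: "expdec x \<Longrightarrow> expdec (\<lambda>i. a * x (i + r))"
proof -
  assume "expdec x"
  then obtain C q where q: "0 < q" "q < 1" and b: "\<And>j. norm (x j) \<le> C * q ^ j"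
    unfolding expdec_def by blast
  have "norm (a * x (i + r)) \<le> (norm a * C * q ^ r) * q ^ i" for i
  proof -
    have "norm (a * x (i + r)) = norm a * norm (x (i + r))" by (simp add: norm_mult)
    also have "\<dots> \<le> norm a * (C * q ^ (i + r))" by (intro mult_left_mono b) simp
    finally show ?thesis by (simp add: power_add algebra_simps)
  qed
  then show ?thesis unfolding expdec_def using q by blast
qed


theorem lemma2p8:
  fixes a lam :: real and p r k :: nat and c :: "int \<Rightarrow> real"
    and alpha beta :: "nat \<Rightarrow> real" and w :: "nat \<Rightarrow> real"
  assumes a_nz: "a \<noteq> 0" and a_neg: "a < 0"
    and c_first: "c (- int r) \<noteq> 0" and c_last: "c (int p) \<noteq> 0"
    and k_pos: "k \<ge> 1" and alpha_k: "alpha k = 1"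
    and alpha_beta_0: "\<bar>alpha 0\<bar> + \<bar>beta 0\<bar> > 0"
    and lam_pos: "lam > 0"
    and A1a: "(\<Sum>l\<in>{- int r..int p}. c l) = 0"
    and A1b: "(\<Sum>l\<in>{- int r..int p}. of_int l * c l) = a"
    and A2a: "(\<Sum>s\<le>k. alpha s) = 0"
    and A2b: "(\<Sum>s\<le>k. of_nat s * alpha s) = (\<Sum>s<k. beta s)"
    and A3: "l2_stable p r c k alpha beta lam"
    and A4: "\<forall>\<theta>\<in>{-pi..pi} - {0}. symbolA p r c (cis \<theta>) \<noteq> 0"
    and w_init: "\<forall>j<r. w j = -1"
    and w_rec: "\<forall>j::nat. (\<Sum>l\<in>{- int r..int p}. c l * w (nat (int j + l + int r))) = 0"
    and w_lim: "w \<longlonglongrightarrow> 0"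
  shows "(\<exists>!wt :: nat \<Rightarrow> real.
            (\<forall>j\<ge>r. (\<Sum>l\<in>{- int r..int p}. c l * wt (nat (int j + l))) + w j = 0)
          \<and> (\<forall>j<r. wt j = 0)
          \<and> wt \<longlonglongrightarrow> 0)
       \<and> (\<forall>wt :: nat \<Rightarrow> real.
            ((\<forall>j\<ge>r. (\<Sum>l\<in>{- int r..int p}. c l * wt (nat (int j + l))) + w j = 0)
          \<and> (\<forall>j<r. wt j = 0)
          \<and> wt \<longlonglongrightarrow> 0)
          \<longrightarrow> (\<exists>C \<delta>. \<delta> > 0 \<and> (\<forall>j. \<bar>wt j\<bar> \<le> C * exp (- \<delta> * real j))))"
proof -
  define P where "P = Ppoly p r c"
  have P0: "P \<noteq> 0" unfolding P_def using Ppoly_nz[of c r p, OF c_first] .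
  define L where "L = lead_coeff P"
  have L0: "L \<noteq> 0" using P0 by (simp add: L_def)
  define Rin where "Rin = filter_mset (\<lambda>z. norm z < 1) (proots P)"
  define Rout where "Rout = filter_mset (\<lambda>z. \<not> norm z < 1) (proots P)"
  have sizeRin: "size Rin = r"
    using size_Rin[OF P0] count_r[OF k_pos alpha_k lam_pos A3 c_first a_neg A1a A1b A2a A2b A4]
    by (simp add: Rin_def P_def)
  have in1: "\<forall>z\<in>#Rin. norm z < 1" by (simp add: Rin_def)
  have out1: "\<forall>z\<in>#Rout. norm z \<ge> 1" by (auto simp: Rout_def)
  have Pdec: "P = smult L (linprod Rout * linprod Rin)"
  proof -
    have "proots P = Rout + Rin" by (simp add: Rin_def Rout_def multiset_partition add.commute)
    then have "linprod (proots P) = linprod Rout * linprod Rin" by (simp add: linprod_def)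
    then show ?thesis using complex_poly_decompose_multiset[of P] by (simp add: L_def linprod_def)
  qed
  have opP: "op P x i = L * op (linprod Rout) (op (linprod Rin) x) i" for x i
    by (subst Pdec) (simp add: op_smult op_mult)
  have opPc: "op P x i = (\<Sum>l\<in>{- int r..int p}. complex_of_real (c l) * x (i + nat (l + int r)))" for x i
    unfolding P_def by (rule op_Ppoly)
  have homo: "op (linprod Rin) x i = 0" if "\<And>i. op P x i = 0" "x \<longlonglongrightarrow> 0" for x i
  proof (rule lp_U[OF out1])
    show "op (linprod Rout) (op (linprod Rin) x) i = 0" for i using that(1)[of i] L0 by (simp add: opP)
    show "op (linprod Rin) x \<longlonglongrightarrow> 0" by (rule op_tendsto0[OF that(2)])
  qed
  define wc where "wc = (\<lambda>j. complex_of_real (w j))"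
  have wc_rec: "op P wc i = 0" for i
  proof -
    have "op P wc i = complex_of_real (\<Sum>l\<in>{- int r..int p}. c l * w (nat (int i + l + int r)))"
      unfolding opPc wc_def of_real_sum of_real_mult by (intro sum.cong refl) (auto simp: nat_shift)
    then show ?thesis using w_rec by simp
  qed
  have wc_lim: "wc \<longlonglongrightarrow> 0" unfolding wc_def using tendsto_of_real[OF w_lim] by simp
  have wcd: "expdec wc"
    by (rule lp_H[OF in1 _ expdec_zero]) (use homo[OF wc_rec wc_lim] in simp)
  define f where "f = (\<lambda>i. (- 1 / L) * wc (i + r))"
  have fd: "expdec f" unfolding f_def by (rule expdec_shift_scale[OF wcd])
  obtain y where yd: "expdec y" and y: "\<And>i. op (linprod Rout) y i = f i"
    using lp_G[OF out1 fd] by blast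
  obtain x where x: "\<And>i. op (linprod Rin) x i = y i" and x0: "\<And>i. i < r \<Longrightarrow> x i = 0"
    using lp_I[of Rin y] sizeRin by auto
  have xd: "expdec x" by (rule lp_H[OF in1 _ yd]) (rule x)
  have opPx: "op P x i = - wc (i + r)" for i
  proof -
    have "op (linprod Rin) x = y" using x by (simp add: fun_eq_iff)
    then show ?thesis using L0 by (simp add: opP y f_def)
  qed
  define wt0 where "wt0 = (\<lambda>j. Re (x j))"
  define Cond where "Cond = (\<lambda>wt :: nat \<Rightarrow> real.
            (\<forall>j\<ge>r. (\<Sum>l\<in>{- int r..int p}. c l * wt (nat (int j + l))) + w j = 0)
          \<and> (\<forall>j<r. wt j = 0)
          \<and> wt \<longlonglongrightarrow> 0)"
  have sumshift: "(\<Sum>l\<in>{- int r..int p}. c l * wt (nat (int (i + r) + l)))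
      = (\<Sum>l\<in>{- int r..int p}. c l * wt (i + nat (l + int r)))" for wt :: "nat \<Rightarrow> real" and i
    by (intro sum.cong refl) (auto simp: nat_shift[symmetric] algebra_simps)
  have C0: "Cond wt0"
    unfolding Cond_def
  proof (intro conjI allI impI)
    fix j assume j: "j \<ge> r"
    define i where "i = j - r"
    have i: "j = i + r" using j by (simp add: i_def)
    have "(\<Sum>l\<in>{- int r..int p}. c l * wt0 (i + nat (l + int r))) = Re (op P x i)"
      unfolding opPc wt0_def by (simp add: Re_sum)
    also have "\<dots> = - w j" using opPx[of i] by (simp add: wc_def i)
    finally show "(\<Sum>l\<in>{- int r..int p}. c l * wt0 (nat (int j + l))) + w j = 0"
      using sumshift[of wt0 i] unfolding i by simp
  next
    fix j assume "j < r" then show "wt0 j = 0" using x0 by (simp add: wt0_def)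
  next
    show "wt0 \<longlonglongrightarrow> 0" unfolding wt0_def using tendsto_Re[OF expdec_tendsto[OF xd]] by simp
  qed
  have uniq: "wt = wt0" if Cw: "Cond wt" for wt
  proof -
    define d where "d = (\<lambda>j. complex_of_real (wt j - wt0 j))"
    have dP: "op P d i = 0" for i
    proof -
      have h1: "\<forall>j\<ge>r. (\<Sum>l\<in>{- int r..int p}. c l * wt (nat (int j + l))) + w j = 0"
        using Cw unfolding Cond_def by blast
      have h2: "\<forall>j\<ge>r. (\<Sum>l\<in>{- int r..int p}. c l * wt0 (nat (int j + l))) + w j = 0"
        using C0 unfolding Cond_def by blast
      have "(\<Sum>l\<in>{- int r..int p}. c l * wt (nat (int (i + r) + l))) + w (i + r) = 0"
        using h1[rule_format, of "i + r"] by simp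
      then have e1: "(\<Sum>l\<in>{- int r..int p}. c l * wt (i + nat (l + int r))) = - w (i + r)"
        unfolding sumshift by (simp add: eq_neg_iff_add_eq_0)
      have "(\<Sum>l\<in>{- int r..int p}. c l * wt0 (nat (int (i + r) + l))) + w (i + r) = 0"
        using h2[rule_format, of "i + r"] by simp
      then have e2: "(\<Sum>l\<in>{- int r..int p}. c l * wt0 (i + nat (l + int r))) = - w (i + r)"
        unfolding sumshift by (simp add: eq_neg_iff_add_eq_0)
      have "op P d i = complex_of_real ((\<Sum>l\<in>{- int r..int p}. c l * wt (i + nat (l + int r)))
             - (\<Sum>l\<in>{- int r..int p}. c l * wt0 (i + nat (l + int r))))"
        unfolding opPc d_def by (simp add: sum_subtractf algebra_simps)
      then show ?thesis using e1 e2 by simp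
    qed
    have dlim: "d \<longlonglongrightarrow> 0"
    proof -
      have "(\<lambda>j. wt j - wt0 j) \<longlonglongrightarrow> 0 - 0"
        using Cw C0 unfolding Cond_def by (intro tendsto_diff) auto
      then show ?thesis unfolding d_def using tendsto_of_real by fastforce
    qed
    have d0: "d i = 0" if "i < size Rin" for i
      using Cw C0 that sizeRin unfolding Cond_def d_def by simp
    have "d j = 0" for j
      by (rule lp_Z[of Rin d]) (use homo[OF dP dlim] d0 in auto)
    then show ?thesis by (simp add: d_def fun_eq_iff)
  qed
  have part1: "\<exists>!wt. Cond wt" using C0 uniq by blast
  have part2: "\<exists>C \<delta>. \<delta> > 0 \<and> (\<forall>j. \<bar>wt j\<bar> \<le> C * exp (- \<delta> * real j))" if "Cond wt" for wt
  proof -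
    obtain C q where q: "0 < q" "q < 1" and b: "\<And>j. norm (x j) \<le> C * q ^ j"
      using xd unfolding expdec_def by blast
    have "\<bar>wt j\<bar> \<le> C * exp (- (- ln q) * real j)" for j
    proof -
      have "\<bar>wt j\<bar> = \<bar>Re (x j)\<bar>" using uniq[OF that] by (simp add: wt0_def)
      also have "\<dots> \<le> norm (x j)" by (rule abs_Re_le_cmod)
      also have "\<dots> \<le> C * q ^ j" by (rule b)
      also have "q ^ j = exp (- (- ln q) * real j)"
      proof -
        have "exp (real j * ln q) = exp (ln q) ^ j" by (rule exp_of_nat_mult)
        then show ?thesis using q by (simp add: mult.commute)
      qed
      finally show ?thesis .
    qed
    moreover have "- ln q > 0" using q by simp
    ultimately show ?thesis by blast
  qed
  have p2': "\<forall>wt. Cond wt \<longrightarrow> (\<exists>C \<delta>. \<delta> > 0 \<and> (\<forall>j. \<bar>wt j\<bar> \<le> C * exp (- \<delta> * real j)))"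
    using part2 by blast
  show ?thesis using part1 p2' by (simp only: Cond_def)
qed


end
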